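(* Let $T_\varepsilon$ be the last time $t$ at which $\max_kx_k(t)-\min_kx_k(t)>\varepsilon$, for $0<\varepsilon<1$. Then $$\mathbb{E}\,T_\varepsilon=O\!\left(\frac{d^2n^4}{p^3\rho^2}\right)\log\frac{n}{\rho\varepsilon}.$$ In particular, in expected time of this order all robots lie within distance $\varepsilon$ of the plane $X=0$ from then on.
   Context: Distributed motion coordination model. Let $G$ be a connected undirected graph on $[n]$ (the robots) without self-loops, and let $R\subseteq[n]$ with $|R|=r$ be the set of robots pinned to the plane $X=0$. Symmetrization: form $G^*$ on $\nu=2n-r$ vertices by adding a mirror copy $i'$ of every $i\notin R$ (with $i'=i$ for $i\in R$). The edges of $G^*$ are the edges of $G$ together with their mirror images $\{i',j'\}$. Weights and parameters: - Assign each vertex $i$ of $G^*$ a weight $a_i$ with $0<a_i<1/(d_i+1)$, where $d_i$ is its degree in $G^*$, and mirror copies receive equal weights. - $d$ is the maximum degree of $G^*$, $\rho=\min_ia_i$, and $p\in(0,1]$. At each time $t$, independently over time, $G_t^*$ is obtained by keeping each edge of $G$ independently with probability $p$ (deleting it with probability $1-p$), together with its mirror image. The matrix $P_t$ is defined by: - $(P_t)_{ij}=a_i$ and $(P_t)_{ji}=a_j$ for each edge $\{i,j\}$ of $G_t^*$; - $(P_t)_{ii}=1-\sum_{j\ne i}(P_t)_{ij}$; - all other entries are $0$. Only the $X$-coordinates matter. Take $x(0)\in\mathbb{R}^\nu$ with $x_i(0)\in[0,1]$ for $i\in[n]$, $x_i(0)=0$ for $i\in R$, and $x_{i'}(0)=-x_i(0)$.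 The dynamics is $x(t+1)=P_tx(t)$. *)

theory Defs
  imports "HOL-Probability.Probability"
begin

text \<open>Vertices of the symmetrized graph G*: (i, False) is robot i, (i, True) is its
  mirror copy i' (only present for i not in R; for i in R, i' = i).\<close>

type_synonym vtx = "nat \<times> bool"

definition mir :: "nat set \<Rightarrow> vtx \<Rightarrow> vtx" where
  "mir R u = (if fst u \<in> R then (fst u, False) else (fst u, \<not> snd u))"

definition sym_vertices :: "nat \<Rightarrow> nat set \<Rightarrow> vtx set" where
  "sym_vertices n R = {(i, False) | i. i < n} \<union> {(i, True) | i. i < n \<and> i \<notin> R}"

definition sym_edges_of :: "nat set \<Rightarrow> nat set \<Rightarrow> vtx set set" where
  "sym_edges_of R e = {(\<lambda>i. (i, False)) ` e, (\<lambda>i. mir R (i, False)) ` e}"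

definition sym_edges :: "nat set \<Rightarrow> nat set set \<Rightarrow> vtx set set" where
  "sym_edges R F = (\<Union>e\<in>F. sym_edges_of R e)"

definition sym_degree :: "nat \<Rightarrow> nat set \<Rightarrow> nat set set \<Rightarrow> vtx \<Rightarrow> nat" where
  "sym_degree n R E u = card {v \<in> sym_vertices n R. v \<noteq> u \<and> {u, v} \<in> sym_edges R E}"

definition simple_graph_on :: "nat \<Rightarrow> nat set set \<Rightarrow> bool" where
  "simple_graph_on n E = (\<forall>e\<in>E. \<exists>i j. i < n \<and> j < n \<and> i \<noteq> j \<and> e = {i, j})"

definition graph_connected :: "nat \<Rightarrow> nat set set \<Rightarrow> bool" where
  "graph_connected n E = (\<forall>i<n. \<forall>j<n. (i, j) \<in> {(k, l). {k, l} \<in> E}\<^sup>*)"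

definition edge_sampling :: "real \<Rightarrow> nat set set \<Rightarrow> (nat \<times> nat set \<Rightarrow> bool) measure" where
  "edge_sampling p E = Pi\<^sub>M (UNIV \<times> E) (\<lambda>_. measure_pmf (bernoulli_pmf p))"

definition kept_edges :: "nat set set \<Rightarrow> (nat \<times> nat set \<Rightarrow> bool) \<Rightarrow> nat \<Rightarrow> nat set set" where
  "kept_edges E \<omega> t = {e \<in> E. \<omega> (t, e)}"

definition motion_matrix ::
  "nat \<Rightarrow> nat set \<Rightarrow> nat set set \<Rightarrow> (vtx \<Rightarrow> real) \<Rightarrow> (nat \<times> nat set \<Rightarrow> bool) \<Rightarrow> nat \<Rightarrow> vtx \<Rightarrow> vtx \<Rightarrow> real" where
  "motion_matrix n R E a \<omega> t u v =
     (if u = v then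
        1 - (\<Sum>w\<in>sym_vertices n R - {u}.
               (if {u, w} \<in> sym_edges R (kept_edges E \<omega> t) then a u else 0))
      else if {u, v} \<in> sym_edges R (kept_edges E \<omega> t) then a u else 0)"

primrec motion_traj ::
  "nat \<Rightarrow> nat set \<Rightarrow> nat set set \<Rightarrow> (vtx \<Rightarrow> real) \<Rightarrow> (vtx \<Rightarrow> real) \<Rightarrow> (nat \<times> nat set \<Rightarrow> bool) \<Rightarrow> nat \<Rightarrow> vtx \<Rightarrow> real" where
  "motion_traj n R E a x0 \<omega> 0 = x0"
| "motion_traj n R E a x0 \<omega> (Suc t) =
     (\<lambda>u. \<Sum>v\<in>sym_vertices n R. motion_matrix n R E a \<omega> t u v * motion_traj n R E a x0 \<omega> t v)"

definition spread :: "vtx set \<Rightarrow> (vtx \<Rightarrow> real) \<Rightarrow> real" where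
  "spread V x = Max (x ` V) - Min (x ` V)"

text \<open>T_eps: the last time t with spread > eps (0 if there is none, \<infinity> if unbounded).\<close>
definition last_time ::
  "nat \<Rightarrow> nat set \<Rightarrow> nat set set \<Rightarrow> (vtx \<Rightarrow> real) \<Rightarrow> (vtx \<Rightarrow> real) \<Rightarrow> real \<Rightarrow> (nat \<times> nat set \<Rightarrow> bool) \<Rightarrow> ennreal" where
  "last_time n R E a x0 eps \<omega> =
     (SUP t\<in>{t. spread (sym_vertices n R) (motion_traj n R E a x0 \<omega> t) > eps}. of_nat t)"

end

theory Submission
  imports Defs
begin

lemma energy_step:
  fixes Vs :: "'v set" and A :: "'v \<Rightarrow> 'v \<Rightarrow> bool" and a x :: "'v \<Rightarrow> real"
  assumes fin: "finite Vs" and sym: "\<And>u w. A u w = A w u"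
    and apos: "\<And>u. u \<in> Vs \<Longrightarrow> 0 < a u"
    and adeg: "\<And>u. u \<in> Vs \<Longrightarrow> a u * (real (card {w\<in>Vs. A u w}) + 1) \<le> 1"
    and rho: "\<And>u. u \<in> Vs \<Longrightarrow> rho \<le> a u"
  shows "(\<Sum>u\<in>Vs. (x u - a u * (\<Sum>w\<in>Vs. if A u w then x u - x w else 0))\<^sup>2 / a u)
         + rho * (\<Sum>u\<in>Vs. \<Sum>w\<in>Vs. if A u w then (x u - x w)\<^sup>2 else 0)
         \<le> (\<Sum>u\<in>Vs. (x u)\<^sup>2 / a u)"
proof -
  define g where "g u = (\<Sum>w\<in>Vs. if A u w then x u - x w else 0)" for u
  define q where "q u = (\<Sum>w\<in>Vs. if A u w then (x u - x w)\<^sup>2 else 0)" for u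
  define N where "N u = {w\<in>Vs. A u w}" for u
  have gN: "g u = (\<Sum>w\<in>N u. x u - x w)" for u
    unfolding g_def N_def using fin by (simp add: sum.inter_filter)
  have qN: "q u = (\<Sum>w\<in>N u. (x u - x w)\<^sup>2)" for u
    unfolding q_def N_def using fin by (simp add: sum.inter_filter)
  have CS: "(g u)\<^sup>2 \<le> real (card (N u)) * q u" for u
    using sum_squared_le_sum_of_squares[of "\<lambda>w. x u - x w" "N u"] unfolding gN qN
    by (simp add: mult.commute)
  have ag: "a u * (g u)\<^sup>2 \<le> (1 - rho) * q u" if u: "u \<in> Vs" for u
  proof -
    have q0: "0 \<le> q u" unfolding q_def by (intro sum_nonneg) auto
    have "a u * (g u)\<^sup>2 \<le> a u * (real (card (N u)) * q u)"
      using CS apos[OF u] by (intro mult_left_mono) auto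
    also have "\<dots> = (a u * real (card (N u))) * q u" by simp
    also have "\<dots> \<le> (1 - a u) * q u"
      using adeg[OF u] q0 unfolding N_def by (intro mult_right_mono) (auto simp: algebra_simps)
    also have "\<dots> \<le> (1 - rho) * q u" using rho[OF u] q0 by (intro mult_right_mono) auto
    finally show ?thesis .
  qed
  have swap: "(\<Sum>u\<in>Vs. x u * g u) = (\<Sum>u\<in>Vs. \<Sum>w\<in>Vs. if A u w then (x w - x u) * x w else 0)"
  proof -
    have "(\<Sum>u\<in>Vs. x u * g u) = (\<Sum>u\<in>Vs. \<Sum>w\<in>Vs. if A u w then (x u - x w) * x u else 0)"
      unfolding g_def sum_distrib_left by (intro sum.cong refl) (auto simp: algebra_simps)
    also have "\<dots> = (\<Sum>w\<in>Vs. \<Sum>u\<in>Vs. if A u w then (x u - x w) * x u else 0)"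
      by (rule sum.swap)
    also have "\<dots> = (\<Sum>u\<in>Vs. \<Sum>w\<in>Vs. if A u w then (x w - x u) * x w else 0)"
      by (intro sum.cong refl) (auto simp: sym)
    finally show ?thesis .
  qed
  have half: "2 * (\<Sum>u\<in>Vs. x u * g u) = (\<Sum>u\<in>Vs. q u)"
  proof -
    have "2 * (\<Sum>u\<in>Vs. x u * g u) = (\<Sum>u\<in>Vs. x u * g u) + (\<Sum>u\<in>Vs. \<Sum>w\<in>Vs. if A u w then (x w - x u) * x w else 0)"
      using swap by simp
    also have "\<dots> = (\<Sum>u\<in>Vs. \<Sum>w\<in>Vs. (if A u w then (x u - x w) * x u else 0) + (if A u w then (x w - x u) * x w else 0))"
      unfolding g_def sum_distrib_left sum.distrib[symmetric]
      by (intro sum.cong refl) (auto simp: algebra_simps)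
    also have "\<dots> = (\<Sum>u\<in>Vs. q u)"
      unfolding q_def by (intro sum.cong refl) (auto simp: power2_eq_square algebra_simps)
    finally show ?thesis .
  qed
  have trm: "(x u - a u * g u)\<^sup>2 / a u = (x u)\<^sup>2 / a u - 2 * (x u * g u) + a u * (g u)\<^sup>2"
    if u: "u \<in> Vs" for u
    using apos[OF u] by (simp add: field_simps power2_eq_square)
  have "(\<Sum>u\<in>Vs. (x u - a u * g u)\<^sup>2 / a u) = (\<Sum>u\<in>Vs. (x u)\<^sup>2 / a u) - 2 * (\<Sum>u\<in>Vs. x u * g u) + (\<Sum>u\<in>Vs. a u * (g u)\<^sup>2)"
    by (simp add: trm sum.distrib sum_subtractf sum_distrib_left)
  also have "\<dots> \<le> (\<Sum>u\<in>Vs. (x u)\<^sup>2 / a u) - (\<Sum>u\<in>Vs. q u) + (\<Sum>u\<in>Vs. (1 - rho) * q u)"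
    using half sum_mono[of Vs "\<lambda>u. a u * (g u)\<^sup>2" "\<lambda>u. (1 - rho) * q u", OF ag] by linarith
  also have "\<dots> = (\<Sum>u\<in>Vs. (x u)\<^sup>2 / a u) - rho * (\<Sum>u\<in>Vs. q u)"
    by (simp add: sum_subtractf sum_distrib_left[symmetric] algebra_simps)
  finally show ?thesis unfolding g_def q_def by simp
qed


lemma short_path:
  fixes r :: "('b \<times> 'b) set"
  assumes fin: "finite A" and sub: "r \<subseteq> A \<times> A" and ij: "(i, j) \<in> r\<^sup>*"
  shows "\<exists>m \<le> card A. (i, j) \<in> r ^^ m"
proof -
  obtain m0 where m0: "(i, j) \<in> r ^^ m0" using ij rtrancl_power by blast
  define m where "m = (LEAST m. (i, j) \<in> r ^^ m)"
  have m: "(i, j) \<in> r ^^ m" unfolding m_def by (rule LeastI[where P="\<lambda>m. (i, j) \<in> r ^^ m", OF m0])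
  have mmin: "\<And>k. (i, j) \<in> r ^^ k \<Longrightarrow> m \<le> k" unfolding m_def by (rule Least_le[where P="\<lambda>m. (i, j) \<in> r ^^ m"])
  show ?thesis
  proof (rule ccontr)
    assume "\<not> ?thesis"
    with m have big: "card A < m" by (meson not_le)
    obtain f where f0: "f 0 = i" and fm: "f m = j" and fs: "\<forall>k<m. (f k, f (Suc k)) \<in> r"
      using m relpow_fun_conv by metis
    have fA: "f k \<in> A" if "k \<le> m" for k
    proof (cases "k < m")
      case True with fs sub show ?thesis by blast
    next
      case False
      with that have "k = Suc (m - 1)" using big by auto
      moreover have "m - 1 < m" using big by auto
      ultimately show ?thesis using fs sub by (metis SigmaD2 subsetD)
    qed
    have "\<not> inj_on f {..m}"
    proof
      assume inj: "inj_on f {..m}"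
      have "card (f ` {..m}) \<le> card A"
        using fA fin by (intro card_mono) auto
      with inj have "card {..m} \<le> card A" by (simp add: card_image)
      with big show False by simp
    qed
    then obtain a b where ab: "a \<le> m" "b \<le> m" "a \<noteq> b" "f a = f b"
      unfolding inj_on_def by auto
    then obtain a b where ab: "a < b" "b \<le> m" "f a = f b"
      by (metis linorder_neqE_nat)
    define g where "g k = (if k \<le> a then f k else f (k + (b - a)))" for k
    define m' where "m' = m - (b - a)"
    have "(i, j) \<in> r ^^ m'"
    proof -
      have "g 0 = i" using f0 by (simp add: g_def)
      moreover have "g m' = j"
      proof (cases "b = m")
        case True then show ?thesis using ab fm by (simp add: g_def m'_def)
      next
        case False
        then have "\<not> m' \<le> a" using ab by (simp add: m'_def)
        then show ?thesis using ab fm by (simp add: g_def m'_def)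
      qed
      moreover have "\<forall>k<m'. (g k, g (Suc k)) \<in> r"
      proof (intro allI impI)
        fix k assume k: "k < m'"
        show "(g k, g (Suc k)) \<in> r"
        proof (cases "Suc k \<le> a")
          case True then show ?thesis using fs ab by (simp add: g_def)
        next
          case False
          show ?thesis
          proof (cases "k = a")
            case True
            then have "g k = f b" "g (Suc k) = f (Suc b)" using ab by (auto simp: g_def)
            moreover have "b < m" using k True ab by (simp add: m'_def)
            ultimately show ?thesis using fs by simp
          next
            case False2: False
            with False have "\<not> k \<le> a" by simp
            then have "g k = f (k + (b - a))" "g (Suc k) = f (Suc (k + (b - a)))"
              by (auto simp: g_def)
            moreover have "k + (b - a) < m" using k ab by (simp add: m'_def)
            ultimately show ?thesis using fs by simp
          qed
        qed
      qed
      ultimately show ?thesis using relpow_fun_conv by metis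
    qed
    then have "m \<le> m'" by (rule mmin)
    moreover have "m' < m" using ab by (simp add: m'_def)
    ultimately show False by simp
  qed
qed

locale model =
  fixes n :: nat and R :: "nat set" and E :: "nat set set" and a :: "vtx \<Rightarrow> real"
    and p :: real and x0 :: "vtx \<Rightarrow> real"
  assumes n1: "n \<ge> 1" and Rn: "R \<subseteq> {..<n}" and Rne: "R \<noteq> {}"
    and simple: "simple_graph_on n E" and conn: "graph_connected n E"
    and apos: "\<forall>u\<in>sym_vertices n R. 0 < a u \<and> a u < 1 / (real (sym_degree n R E u) + 1)"
    and amir: "\<forall>u\<in>sym_vertices n R. a (mir R u) = a u"
    and p0: "0 < p" and p1: "p \<le> 1"
    and x0b: "\<forall>i<n. 0 \<le> x0 (i, False) \<and> x0 (i, False) \<le> 1"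
    and x0mir: "\<forall>u\<in>sym_vertices n R. x0 (mir R u) = - x0 u"
begin

abbreviation "Vs \<equiv> sym_vertices n R"

lemma Vs_sub: "Vs \<subseteq> {..<n} \<times> UNIV"
  unfolding sym_vertices_def by auto

lemma finite_Vs: "finite Vs"
  by (rule finite_subset[OF Vs_sub]) auto

lemma card_Vs: "card Vs \<le> 2 * n"
proof -
  have "card Vs \<le> card ({..<n} \<times> (UNIV :: bool set))"
    by (rule card_mono[OF _ Vs_sub]) auto
  also have "\<dots> = 2 * n" by (simp add: card_cartesian_product)
  finally show ?thesis .
qed

lemma Vs_ne: "Vs \<noteq> {}"
proof -
  have "(0, False) \<in> Vs" using n1 unfolding sym_vertices_def by simp
  then show ?thesis by blast
qed

lemma mem_Vs: "u \<in> Vs \<longleftrightarrow> fst u < n \<and> (snd u \<longrightarrow> fst u \<notin> R)"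
  unfolding sym_vertices_def by (cases u) auto

lemma E_sub: "E \<subseteq> Pow {..<n}"
proof
  fix e assume "e \<in> E"
  then obtain i j where "i < n" "j < n" "e = {i, j}"
    using simple unfolding simple_graph_on_def by blast
  then show "e \<in> Pow {..<n}" by auto
qed

lemma finite_E: "finite E"
  by (rule finite_subset[OF E_sub]) auto

lemma mir_Vs: "u \<in> Vs \<Longrightarrow> mir R u \<in> Vs"
  by (cases u) (auto simp: mem_Vs mir_def)

lemma mir_mir: "u \<in> Vs \<Longrightarrow> mir R (mir R u) = u"
  by (cases u) (auto simp: mem_Vs mir_def)

lemma mir_mir_F: "mir R (mir R (i, False)) = (i, False)"
  by (auto simp: mir_def)

lemma sym_edges_mir:
  assumes "{u, v} \<in> sym_edges R F"
  shows "{mir R u, mir R v} \<in> sym_edges R F"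
proof -
  obtain e where e: "e \<in> F" "{u, v} \<in> sym_edges_of R e"
    using assms unfolding sym_edges_def by blast
  let ?A = "(\<lambda>i. (i, False)) ` e"
  have B: "(\<lambda>i. mir R (i, False)) ` e = mir R ` ?A" by auto
  have AA: "mir R ` (mir R ` ?A) = ?A" by (auto simp: image_image mir_mir_F)
  have im: "mir R ` {u, v} = {mir R u, mir R v}" by simp
  from e(2) have "{u, v} = ?A \<or> {u, v} = mir R ` ?A"
    unfolding sym_edges_of_def B by simp
  then have "{mir R u, mir R v} = mir R ` ?A \<or> {mir R u, mir R v} = ?A"
    using im AA by metis
  then have "{mir R u, mir R v} \<in> sym_edges_of R e"
    unfolding sym_edges_of_def B by (simp only: insert_iff empty_iff) blast
  with e(1) show ?thesis unfolding sym_edges_def by blast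
qed

lemma sym_edges_mir_iff:
  assumes "u \<in> Vs" "v \<in> Vs"
  shows "{mir R u, mir R v} \<in> sym_edges R F \<longleftrightarrow> {u, v} \<in> sym_edges R F"
  using sym_edges_mir[of "mir R u" "mir R v" F] sym_edges_mir[of u v F]
  by (auto simp: mir_mir assms)

lemma sym_edges_mono: "F \<subseteq> G \<Longrightarrow> sym_edges R F \<subseteq> sym_edges R G"
  unfolding sym_edges_def by auto

lemma kept_sub: "kept_edges E \<omega> t \<subseteq> E"
  unfolding kept_edges_def by auto

definition act :: "(nat \<times> nat set \<Rightarrow> bool) \<Rightarrow> nat \<Rightarrow> vtx \<Rightarrow> vtx \<Rightarrow> bool" where
  "act \<omega> t u w = (u \<noteq> w \<and> {u, w} \<in> sym_edges R (kept_edges E \<omega> t))"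

lemma act_sym: "act \<omega> t u w = act \<omega> t w u"
  unfolding act_def by (auto simp: insert_commute)

abbreviation "traj \<equiv> motion_traj n R E a x0"

lemma step:
  assumes u: "u \<in> Vs"
  shows "traj \<omega> (Suc t) u = traj \<omega> t u - a u * (\<Sum>w\<in>Vs. if act \<omega> t u w then traj \<omega> t u - traj \<omega> t w else 0)"
proof -
  let ?x = "traj \<omega> t"
  let ?S = "sym_edges R (kept_edges E \<omega> t)"
  define c where "c w = (if {u, w} \<in> ?S then a u else 0)" for w
  have split: "(\<Sum>v\<in>Vs. f v) = f u + (\<Sum>v\<in>Vs - {u}. f v)" for f :: "vtx \<Rightarrow> real"
    using u finite_Vs by (simp add: sum.remove)
  have "traj \<omega> (Suc t) u = (\<Sum>v\<in>Vs. motion_matrix n R E a \<omega> t u v * ?x v)" by simp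
  also have "\<dots> = (1 - (\<Sum>w\<in>Vs - {u}. c w)) * ?x u + (\<Sum>v\<in>Vs - {u}. c v * ?x v)"
  proof (subst split, rule arg_cong2[where f="(+)"])
    show "motion_matrix n R E a \<omega> t u u * ?x u = (1 - (\<Sum>w\<in>Vs - {u}. c w)) * ?x u"
      by (simp add: motion_matrix_def c_def)
    show "(\<Sum>v\<in>Vs - {u}. motion_matrix n R E a \<omega> t u v * ?x v) = (\<Sum>v\<in>Vs - {u}. c v * ?x v)"
    proof (rule sum.cong[OF refl])
      fix v assume "v \<in> Vs - {u}"
      then have "u \<noteq> v" by auto
      then show "motion_matrix n R E a \<omega> t u v * ?x v = c v * ?x v"
        by (simp add: motion_matrix_def c_def)
    qed
  qed
  also have "\<dots> = ?x u - (\<Sum>w\<in>Vs - {u}. c w * (?x u - ?x w))"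
    by (simp add: algebra_simps sum_subtractf sum_distrib_right sum_distrib_left)
  also have "(\<Sum>w\<in>Vs - {u}. c w * (?x u - ?x w))
      = a u * (\<Sum>w\<in>Vs - {u}. if act \<omega> t u w then ?x u - ?x w else 0)"
    unfolding sum_distrib_left by (rule sum.cong) (auto simp: c_def act_def)
  also have "(\<Sum>w\<in>Vs - {u}. if act \<omega> t u w then ?x u - ?x w else 0)
      = (\<Sum>w\<in>Vs. if act \<omega> t u w then ?x u - ?x w else 0)"
    by (subst split[of "\<lambda>w. if act \<omega> t u w then ?x u - ?x w else 0"]) (simp add: act_def)
  finally show ?thesis .
qed

end

context model begin

definition V :: "(vtx \<Rightarrow> real) \<Rightarrow> real" where
  "V x = (\<Sum>u\<in>Vs. (x u)\<^sup>2 / a u)"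

definition rho :: real where "rho = Min (a ` Vs)"

definition Qf :: "(vtx \<Rightarrow> real) \<Rightarrow> real" where
  "Qf x = (\<Sum>u\<in>Vs. \<Sum>w\<in>Vs. if u \<noteq> w \<and> {u, w} \<in> sym_edges R E then (x u - x w)\<^sup>2 else 0)"

definition Qa :: "(nat \<times> nat set \<Rightarrow> bool) \<Rightarrow> nat \<Rightarrow> (vtx \<Rightarrow> real) \<Rightarrow> real" where
  "Qa \<omega> t x = (\<Sum>u\<in>Vs. \<Sum>w\<in>Vs. if act \<omega> t u w then (x u - x w)\<^sup>2 else 0)"

lemma a_pos: "u \<in> Vs \<Longrightarrow> 0 < a u" using apos by auto

lemma rho_le: "u \<in> Vs \<Longrightarrow> rho \<le> a u"
  unfolding rho_def using finite_Vs by (intro Min_le) auto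

lemma rho_pos: "0 < rho"
  unfolding rho_def using finite_Vs Vs_ne a_pos by (subst Min_gr_iff) auto

lemma a_deg: "u \<in> Vs \<Longrightarrow> a u * (real (sym_degree n R E u) + 1) < 1"
  using apos by (auto simp: field_simps)

lemma a_lt1: "u \<in> Vs \<Longrightarrow> a u < 1"
proof -
  assume u: "u \<in> Vs"
  have "a u * 1 \<le> a u * (real (sym_degree n R E u) + 1)"
    using a_pos[OF u] by (intro mult_left_mono) auto
  with a_deg[OF u] show ?thesis by simp
qed

lemma adeg_act:
  assumes u: "u \<in> Vs"
  shows "a u * (real (card {w\<in>Vs. act \<omega> t u w}) + 1) \<le> 1"
proof -
  have "{w\<in>Vs. act \<omega> t u w} \<subseteq> {v \<in> Vs. v \<noteq> u \<and> {u, v} \<in> sym_edges R E}"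
    using sym_edges_mono[OF kept_sub] unfolding act_def by auto
  then have "card {w\<in>Vs. act \<omega> t u w} \<le> sym_degree n R E u"
    unfolding sym_degree_def using finite_Vs by (intro card_mono) auto
  then have "a u * (real (card {w\<in>Vs. act \<omega> t u w}) + 1) \<le> a u * (real (sym_degree n R E u) + 1)"
    using a_pos[OF u] by (intro mult_left_mono) auto
  with a_deg[OF u] show ?thesis by simp
qed

lemma energy:
  "V (traj \<omega> (Suc t)) + rho * Qa \<omega> t (traj \<omega> t) \<le> V (traj \<omega> t)"
proof -
  have "V (traj \<omega> (Suc t)) = (\<Sum>u\<in>Vs. (traj \<omega> t u - a u * (\<Sum>w\<in>Vs. if act \<omega> t u w then traj \<omega> t u - traj \<omega> t w else 0))\<^sup>2 / a u)"
    unfolding V_def by (rule sum.cong[OF refl]) (simp only: step)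
  then show ?thesis unfolding Qa_def V_def
    using energy_step[of Vs "act \<omega> t" a rho "traj \<omega> t", OF finite_Vs act_sym a_pos adeg_act rho_le]
    by simp
qed

lemma V_nonneg: "0 \<le> V x"
  unfolding V_def
proof (intro sum_nonneg)
  fix u assume "u \<in> Vs"
  then show "0 \<le> (x u)\<^sup>2 / a u" using a_pos[of u] by simp
qed

lemma Qa_nonneg: "0 \<le> Qa \<omega> t x"
  unfolding Qa_def by (intro sum_nonneg) auto

lemma V_mono_step: "V (traj \<omega> (Suc t)) \<le> V (traj \<omega> t)"
  using energy[of \<omega> t] rho_pos Qa_nonneg[of \<omega> t "traj \<omega> t"] by (smt (verit) mult_nonneg_nonneg)

lemma V_mono: "s \<le> t \<Longrightarrow> V (traj \<omega> t) \<le> V (traj \<omega> s)"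
proof (induction t)
  case 0 then show ?case by simp
next
  case (Suc t)
  show ?case
  proof (cases "s = Suc t")
    case False
    with Suc have "V (traj \<omega> t) \<le> V (traj \<omega> s)" by simp
    with V_mono_step[of \<omega> t] show ?thesis by simp
  qed simp
qed

lemma sum_mir: "(\<Sum>w\<in>Vs. f (mir R w)) = (\<Sum>w\<in>Vs. f w)"
  by (rule sum.reindex_bij_witness[where i="mir R" and j="mir R"]) (auto simp: mir_mir mir_Vs)

lemma act_mir:
  assumes "u \<in> Vs" "w \<in> Vs"
  shows "act \<omega> t (mir R u) (mir R w) = act \<omega> t u w"
proof -
  have "mir R u = mir R w \<longleftrightarrow> u = w" using assms by (metis mir_mir)
  then show ?thesis unfolding act_def using sym_edges_mir_iff[OF assms] by simp
qed

lemma antisym: "u \<in> Vs \<Longrightarrow> traj \<omega> t (mir R u) = - traj \<omega> t u"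
proof (induction t arbitrary: u)
  case 0 then show ?case using x0mir by simp
next
  case (Suc t)
  let ?x = "traj \<omega> t"
  have mu: "mir R u \<in> Vs" using mir_Vs[OF Suc.prems] .
  have "(\<Sum>w\<in>Vs. if act \<omega> t (mir R u) w then ?x (mir R u) - ?x w else 0)
      = (\<Sum>w\<in>Vs. if act \<omega> t (mir R u) (mir R w) then ?x (mir R u) - ?x (mir R w) else 0)"
    by (rule sum_mir[symmetric])
  also have "\<dots> = (\<Sum>w\<in>Vs. - (if act \<omega> t u w then ?x u - ?x w else 0))"
    by (rule sum.cong[OF refl]) (simp add: act_mir Suc.prems Suc.IH)
  finally show ?case
    using step[OF mu, of \<omega> t] step[OF Suc.prems, of \<omega> t] Suc.IH[OF Suc.prems]
      amir Suc.prems by (simp add: sum_negf)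
qed

lemma traj_R: "r \<in> R \<Longrightarrow> traj \<omega> t (r, False) = 0"
proof -
  assume r: "r \<in> R"
  then have rv: "(r, False) \<in> Vs" using Rn by (auto simp: mem_Vs)
  have "mir R (r, False) = (r, False)" using r by (simp add: mir_def)
  with antisym[OF rv, of \<omega> t] show ?thesis by simp
qed

end

context model begin

definition rel :: "(nat \<times> nat) set" where "rel = {(k, l). {k, l} \<in> E}"

lemma rel_edge:
  assumes "(k, l) \<in> rel"
  shows "k < n" "l < n" "k \<noteq> l"
proof -
  from assms have "{k, l} \<in> E" by (simp add: rel_def)
  then obtain i j where ij: "i < n" "j < n" "i \<noteq> j" "{k, l} = {i, j}"
    using simple unfolding simple_graph_on_def by blast
  then show "k < n" "l < n" "k \<noteq> l" by (auto simp: doubleton_eq_iff)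
qed

lemma Qf_nonneg: "0 \<le> Qf x"
  unfolding Qf_def by (intro sum_nonneg) simp

lemma edge_le_Qf:
  assumes "(k, l) \<in> rel"
  shows "(x (k, False) - x (l, False))\<^sup>2 \<le> Qf x"
proof -
  note kl = rel_edge[OF assms]
  have kv: "(k, False) \<in> Vs" and lv: "(l, False) \<in> Vs" using kl by (auto simp: mem_Vs)
  have e: "{k, l} \<in> E" using assms by (simp add: rel_def)
  have "{(k, False), (l, False)} \<in> sym_edges_of R {k, l}"
    unfolding sym_edges_of_def by simp
  with e have se: "{(k, False), (l, False)} \<in> sym_edges R E"
    unfolding sym_edges_def by blast
  let ?f = "\<lambda>u w. if u \<noteq> w \<and> {u, w} \<in> sym_edges R E then (x u - x w)\<^sup>2 else 0"
  have tnn: "0 \<le> ?f u w" for u w by simp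
  have "(x (k, False) - x (l, False))\<^sup>2 = ?f (k, False) (l, False)"
    using se kl by simp
  also have "\<dots> \<le> (\<Sum>w\<in>Vs. ?f (k, False) w)"
    by (rule member_le_sum[OF lv _ finite_Vs]) (blast intro: tnn)
  also have "\<dots> \<le> (\<Sum>u\<in>Vs. \<Sum>w\<in>Vs. ?f u w)"
    by (rule member_le_sum[OF kv _ finite_Vs]) (blast intro: sum_nonneg tnn)
  finally show ?thesis unfolding Qf_def .
qed

lemma path_bound:
  assumes "(i, j) \<in> rel ^^ m"
  shows "\<bar>x (i, False) - x (j, False)\<bar> \<le> real m * sqrt (Qf x)"
  using assms
proof (induction m arbitrary: j)
  case 0 then show ?case by simp
next
  case (Suc m)
  then obtain k where ik: "(i, k) \<in> rel ^^ m" and kj: "(k, j) \<in> rel" by auto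
  have "\<bar>x (k, False) - x (j, False)\<bar> \<le> sqrt (Qf x)"
    using edge_le_Qf[OF kj] by (metis real_sqrt_abs real_sqrt_le_mono)
  with Suc.IH[OF ik] show ?case by (simp add: algebra_simps)
qed

lemma poincare:
  assumes anti: "\<forall>u\<in>Vs. x (mir R u) = - x u" and r0: "\<forall>r\<in>R. x (r, False) = 0"
    and u: "u \<in> Vs"
  shows "(x u)\<^sup>2 \<le> (real n)\<^sup>2 * Qf x"
proof -
  obtain i b where ub: "u = (i, b)" by (cases u)
  have i: "i < n" using u ub by (simp add: mem_Vs)
  have xu: "\<bar>x u\<bar> = \<bar>x (i, False)\<bar>"
  proof (cases b)
    case True
    then have "i \<notin> R" using u ub by (simp add: mem_Vs)
    then have "mir R (i, False) = u" using True ub by (simp add: mir_def)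
    moreover have "(i, False) \<in> Vs" using i by (simp add: mem_Vs)
    ultimately show ?thesis using anti by force
  qed (simp add: ub)
  obtain r where r: "r \<in> R" using Rne by blast
  have rn: "r < n" using r Rn by auto
  have "(i, r) \<in> rel\<^sup>*" using conn i rn unfolding graph_connected_def rel_def by blast
  moreover have "rel \<subseteq> {..<n} \<times> {..<n}" using rel_edge by auto
  ultimately obtain m where m: "m \<le> n" "(i, r) \<in> rel ^^ m"
    using short_path[of "{..<n}" rel i r] by auto
  have "\<bar>x u\<bar> \<le> real m * sqrt (Qf x)"
    using path_bound[OF m(2), of x] xu r0 r by simp
  also have "\<dots> \<le> real n * sqrt (Qf x)"
    using m(1) Qf_nonneg[of x] by (intro mult_right_mono) auto
  finally have "\<bar>x u\<bar> \<le> real n * sqrt (Qf x)" .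
  then have "\<bar>x u\<bar>\<^sup>2 \<le> (real n * sqrt (Qf x))\<^sup>2"
    by (intro power_mono) auto
  moreover have "0 \<le> Qf x" by (rule Qf_nonneg)
  ultimately show ?thesis by (simp add: power_mult_distrib)
qed

end

lemma PPS: "product_prob_space (\<lambda>_::nat \<times> nat set. measure_pmf (bernoulli_pmf p))"
  by unfold_locales

lemma PSF: "product_sigma_finite (\<lambda>_::nat \<times> nat set. measure_pmf (bernoulli_pmf p))"
  by unfold_locales

abbreviation PJ :: "real \<Rightarrow> (nat \<times> nat set) set \<Rightarrow> (nat \<times> nat set \<Rightarrow> bool) measure" where
  "PJ q J \<equiv> PiM J (\<lambda>_. measure_pmf (bernoulli_pmf q))"

lemma space_PJ: "space (PJ q J) = PiE J (\<lambda>_. UNIV)"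
  by (simp add: space_PiM)

lemma PJ_singleton: "x \<in> PiE J (\<lambda>_. UNIV) \<Longrightarrow> PiE J (\<lambda>j. {x j}) = {x}"
  by (rule PiE_singleton) (simp add: PiE_iff)

lemma all_sets:
  assumes fin: "finite J" and A: "A \<subseteq> space (PJ q J)"
  shows "A \<in> sets (PJ q J)"
proof -
  have finA: "finite A"
    using A by (rule finite_subset) (simp add: space_PJ finite_PiE fin)
  have "A = (\<Union>x\<in>A. PiE J (\<lambda>j. {x j}))"
  proof -
    have "\<And>x. x \<in> A \<Longrightarrow> PiE J (\<lambda>j. {x j}) = {x}"
    proof -
      fix x assume "x \<in> A"
      then have "x \<in> PiE J (\<lambda>_. UNIV)" using A by (auto simp: space_PJ)
      then show "PiE J (\<lambda>j. {x j}) = {x}" by (rule PJ_singleton)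
    qed
    then show ?thesis by auto
  qed
  also have "\<dots> \<in> sets (PJ q J)"
    using finA fin by (intro sets.finite_UN sets_PiM_I_finite) auto
  finally show ?thesis .
qed

lemma meas_fin:
  assumes fin: "finite J"
  shows "f \<in> borel_measurable (PJ q J)"
  by (rule measurableI) (auto intro!: all_sets[OF fin])

lemma int_fin:
  fixes f :: "_ \<Rightarrow> real"
  assumes fin: "finite J"
  shows "integrable (PJ q J) f"
proof -
  interpret P: prob_space "PJ q J" by (rule prob_space_PiM) (simp add: prob_space_measure_pmf)
  have fs: "finite (space (PJ q J))" using fin by (simp add: space_PJ finite_PiE)
  show ?thesis
    by (rule P.integrable_const_bound[where B="Max ((\<lambda>x. norm (f x)) ` space (PJ q J))"])
       (auto intro!: Max_ge fs meas_fin[OF fin])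
qed

definition dep :: "(nat \<times> nat set) set \<Rightarrow> ((nat \<times> nat set \<Rightarrow> bool) \<Rightarrow> 'b) \<Rightarrow> bool" where
  "dep J h = (\<forall>\<omega> \<omega>'. (\<forall>j\<in>J. \<omega> j = \<omega>' j) \<longrightarrow> h \<omega> = h \<omega>')"

lemma dep_restrict: "dep J h \<Longrightarrow> h (restrict \<omega> J) = h \<omega>"
  unfolding dep_def by auto

lemma meas_dep:
  assumes fin: "finite J" and JE: "J \<subseteq> UNIV \<times> E" and d: "dep J h"
  shows "h \<in> borel_measurable (PiM (UNIV \<times> E) (\<lambda>_. measure_pmf (bernoulli_pmf q)))"
proof -
  have "(\<lambda>\<omega>. h (restrict \<omega> J)) \<in> borel_measurable (PiM (UNIV \<times> E) (\<lambda>_. measure_pmf (bernoulli_pmf q)))"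
    by (rule measurable_compose[OF measurable_restrict_subset[OF JE] meas_fin[OF fin]])
  then show ?thesis using dep_restrict[OF d] by simp
qed

lemma int_transfer:
  fixes h :: "_ \<Rightarrow> ennreal"
  assumes fin: "finite J" and JE: "J \<subseteq> UNIV \<times> E" and d: "dep J h"
  shows "(\<integral>\<^sup>+\<omega>. h \<omega> \<partial>PiM (UNIV \<times> E) (\<lambda>_. measure_pmf (bernoulli_pmf q))) = (\<integral>\<^sup>+\<omega>. h \<omega> \<partial>PJ q J)"
proof -
  have "(\<integral>\<^sup>+\<omega>. h \<omega> \<partial>PJ q J)
      = (\<integral>\<^sup>+\<omega>. h \<omega> \<partial>distr (PiM (UNIV \<times> E) (\<lambda>_. measure_pmf (bernoulli_pmf q))) (PJ q J) (\<lambda>x. restrict x J))"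
    using product_prob_space.distr_PiM_restrict_finite[OF PPS fin JE] by simp
  also have "\<dots> = (\<integral>\<^sup>+\<omega>. h (restrict \<omega> J) \<partial>PiM (UNIV \<times> E) (\<lambda>_. measure_pmf (bernoulli_pmf q)))"
    by (rule nn_integral_distr[OF measurable_restrict_subset[OF JE]]) (simp add: meas_fin[OF fin])
  also have "\<dots> = (\<integral>\<^sup>+\<omega>. h \<omega> \<partial>PiM (UNIV \<times> E) (\<lambda>_. measure_pmf (bernoulli_pmf q)))"
    using dep_restrict[OF d] by simp
  finally show ?thesis by simp
qed

context model begin

lemma traj_dep:
  "(\<forall>s<t. \<forall>e\<in>E. \<omega> (s, e) = \<omega>' (s, e)) \<Longrightarrow> traj \<omega> t = traj \<omega>' t"
proof (induction t)
  case 0 then show ?case by simp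
next
  case (Suc t)
  then have IH: "traj \<omega> t = traj \<omega>' t" by simp
  have "kept_edges E \<omega> t = kept_edges E \<omega>' t"
    using Suc.prems unfolding kept_edges_def by auto
  then have "motion_matrix n R E a \<omega> t = motion_matrix n R E a \<omega>' t"
    by (simp add: motion_matrix_def fun_eq_iff)
  with IH show ?case by simp
qed

definition Jt :: "nat \<Rightarrow> (nat \<times> nat set) set" where "Jt t = {..<t} \<times> E"

lemma Jt_fin: "finite (Jt t)" unfolding Jt_def using finite_E by simp

lemma Jt_sub: "Jt t \<subseteq> UNIV \<times> E" unfolding Jt_def by auto

lemma dep_traj: "dep (Jt t) (\<lambda>\<omega>. f (traj \<omega> t))"
  unfolding dep_def Jt_def using traj_dep[of t] by (metis lessThan_iff mem_Sigma_iff)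

definition gam :: real where "gam = p * rho\<^sup>2 / (2 * real n ^ 3)"

lemma rho_lt1: "rho < 1"
proof -
  obtain u where "u \<in> Vs" using Vs_ne by blast
  with rho_le a_lt1 show ?thesis by (meson le_less_trans)
qed

lemma gam_pos: "0 < gam" unfolding gam_def using p0 rho_pos n1 by simp

lemma gam_le: "gam \<le> 1"
proof -
  have "p * rho\<^sup>2 \<le> 1 * 1"
    using p0 p1 rho_pos rho_lt1 by (intro mult_mono) (auto simp: power_le_one)
  moreover have "1 \<le> real n ^ 3" using n1 by (simp add: one_le_power)
  then have "1 \<le> 2 * real n ^ 3" by simp
  ultimately show ?thesis unfolding gam_def by (auto simp: divide_le_eq_1)
qed

lemma contraction:
  assumes anti: "\<forall>u\<in>Vs. X (mir R u) = - X u" and r0: "\<forall>r\<in>R. X (r, False) = 0"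
  shows "V X - rho * p * Qf X \<le> (1 - gam) * V X"
proof -
  have "V X \<le> (\<Sum>u\<in>Vs. (real n)\<^sup>2 * Qf X / rho)"
    unfolding V_def
  proof (rule sum_mono)
    fix u assume u: "u \<in> Vs"
    have "(X u)\<^sup>2 / a u \<le> (X u)\<^sup>2 / rho"
      using rho_le[OF u] rho_pos by (intro divide_left_mono) auto
    also have "\<dots> \<le> (real n)\<^sup>2 * Qf X / rho"
      using poincare[OF anti r0 u] rho_pos by (intro divide_right_mono) auto
    finally show "(X u)\<^sup>2 / a u \<le> (real n)\<^sup>2 * Qf X / rho" .
  qed
  also have "\<dots> = real (card Vs) * (real n)\<^sup>2 * Qf X / rho" by simp
  also have "\<dots> \<le> real (2 * n) * (real n)\<^sup>2 * Qf X / rho"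
    using card_Vs Qf_nonneg[of X] rho_pos
    by (intro divide_right_mono mult_right_mono) auto
  finally have VX: "V X \<le> 2 * real n ^ 3 * Qf X / rho" by (simp add: power2_eq_square power3_eq_cube)
  have "gam * V X \<le> gam * (2 * real n ^ 3 * Qf X / rho)"
    using VX gam_pos by (intro mult_left_mono) auto
  also have "\<dots> = rho * p * Qf X"
    unfolding gam_def using n1 rho_pos by (simp add: field_simps power2_eq_square)
  finally show ?thesis by (simp add: algebra_simps)
qed

end

context model begin

lemma inner:
  "(\<integral>\<^sup>+y. ennreal (V (traj (merge (Jt t) ({t} \<times> E) (x, y)) (Suc t))) \<partial>PJ p ({t} \<times> E))
     \<le> ennreal ((1 - gam) * V (traj x t))"
proof -
  let ?K = "{t} \<times> E"
  let ?M = "PJ p ?K"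
  interpret P: prob_space ?M by (rule prob_space_PiM) (simp add: prob_space_measure_pmf)
  define z where "z y = merge (Jt t) ?K (x, y)" for y
  define X where "X = traj x t"
  have finK: "finite ?K" using finite_E by simp
  have disj: "Jt t \<inter> ?K = {}" by (auto simp: Jt_def)
  have zt: "traj (z y) t = X" for y
    unfolding X_def z_def
  proof (rule traj_dep, intro allI impI ballI)
    fix s e assume "s < t" "e \<in> E"
    then have "(s, e) \<in> Jt t" by (simp add: Jt_def)
    then show "merge (Jt t) ?K (x, y) (s, e) = x (s, e)" by (rule merge_apply(1)[OF disj])
  qed
  have kept: "kept_edges E (z y) t = {e\<in>E. y (t, e)}" for y
  proof -
    have m: "merge (Jt t) ?K (x, y) (t, e) = y (t, e)" if "e \<in> E" for e
      using that by (intro merge_apply(2)[OF disj]) simp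
    show ?thesis unfolding kept_edges_def z_def
    proof (rule Collect_cong)
      fix e show "(e \<in> E \<and> merge (Jt t) ?K (x, y) (t, e)) = (e \<in> E \<and> y (t, e))"
        using m[of e] by blast
    qed
  qed
  define ed where "ed u w = (SOME e. e \<in> E \<and> {u, w} \<in> sym_edges_of R e)" for u w
  define Af where "Af u w = (u \<noteq> w \<and> {u, w} \<in> sym_edges R E)" for u w
  define c where "c u w = (X u - X w)\<^sup>2" for u w
  define Ql where "Ql y = (\<Sum>u\<in>Vs. \<Sum>w\<in>Vs. if Af u w \<and> y (t, ed u w) then c u w else 0)" for y
  have ed: "ed u w \<in> E \<and> {u, w} \<in> sym_edges_of R (ed u w)" if "Af u w" for u w
  proof -
    have "\<exists>e. e \<in> E \<and> {u, w} \<in> sym_edges_of R e"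
      using that unfolding Af_def sym_edges_def by (simp add: UN_iff Bex_def)
    from someI_ex[OF this] show ?thesis unfolding ed_def .
  qed
  have Ql_le: "Ql y \<le> Qa (z y) t X" for y
    unfolding Ql_def Qa_def
  proof (intro sum_mono)
    fix u w
    show "(if Af u w \<and> y (t, ed u w) then c u w else 0) \<le> (if act (z y) t u w then (X u - X w)\<^sup>2 else 0)"
    proof (cases "Af u w \<and> y (t, ed u w)")
      case True
      then have "ed u w \<in> kept_edges E (z y) t" using ed kept by auto
      then have "{u, w} \<in> sym_edges R (kept_edges E (z y) t)"
        using ed True unfolding sym_edges_def by blast
      then have "act (z y) t u w" using True unfolding act_def Af_def by simp
      then show ?thesis using True by (simp add: c_def)
    next
      case False then show ?thesis by auto
    qed
  qed
  have pw: "V (traj (z y) (Suc t)) \<le> V X - rho * Ql y" for y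
  proof -
    have "rho * Ql y \<le> rho * Qa (z y) t X" using Ql_le[of y] rho_pos by (intro mult_left_mono) auto
    moreover have "V (traj (z y) (Suc t)) + rho * Qa (z y) t X \<le> V X"
      using energy[of "z y" t] unfolding zt[of y] .
    ultimately show ?thesis by linarith
  qed
  have one: "integral\<^sup>L ?M (\<lambda>y. if Af u w \<and> y (t, ed u w) then c u w else 0) = (if Af u w then c u w * p else 0)" for u w
  proof (cases "Af u w")
    case False then show ?thesis by simp
  next
    case True
    let ?S = "{y \<in> space ?M. y (t, ed u w) \<in> {True}}"
    have "(\<integral>y. (if Af u w \<and> y (t, ed u w) then c u w else 0) \<partial>?M) = (\<integral>y. indicator ?S y * c u w \<partial>?M)"
      using True by (intro Bochner_Integration.integral_cong) (auto simp: indicator_def)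
    also have "\<dots> = measure ?M ?S * c u w" by (simp add: Int_absorb2)
    also have "measure ?M ?S = p"
    proof -
      have "emeasure ?M ?S = emeasure (measure_pmf (bernoulli_pmf p)) {True}"
        by (rule product_prob_space.emeasure_PiM_Collect_single[OF PPS]) (auto simp: ed[OF True])
      also have "\<dots> = ennreal p" using p0 p1 by (simp add: emeasure_pmf_single)
      finally show ?thesis unfolding measure_def using p0 by simp
    qed
    finally show ?thesis using True by simp
  qed
  have intQl: "integral\<^sup>L ?M Ql = p * Qf X"
  proof -
    have "integral\<^sup>L ?M Ql = (\<Sum>u\<in>Vs. \<Sum>w\<in>Vs. integral\<^sup>L ?M (\<lambda>y. if Af u w \<and> y (t, ed u w) then c u w else 0))"
      unfolding Ql_def
    proof (subst Bochner_Integration.integral_sum)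
      show "integrable ?M (\<lambda>y. \<Sum>w\<in>Vs. if Af u w \<and> y (t, ed u w) then c u w else 0)" for u
        by (rule int_fin[OF finK])
      show "(\<Sum>u\<in>Vs. integral\<^sup>L ?M (\<lambda>y. \<Sum>w\<in>Vs. if Af u w \<and> y (t, ed u w) then c u w else 0)) =
        (\<Sum>u\<in>Vs. \<Sum>w\<in>Vs. integral\<^sup>L ?M (\<lambda>y. if Af u w \<and> y (t, ed u w) then c u w else 0))"
        by (intro sum.cong refl Bochner_Integration.integral_sum int_fin[OF finK])
    qed
    also have "\<dots> = (\<Sum>u\<in>Vs. \<Sum>w\<in>Vs. if Af u w then c u w * p else 0)"
      by (simp add: one)
    also have "\<dots> = p * Qf X"
      unfolding Qf_def sum_distrib_left Af_def c_def by (intro sum.cong refl) auto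
    finally show ?thesis .
  qed
  have "integral\<^sup>L ?M (\<lambda>y. V (traj (z y) (Suc t))) \<le> integral\<^sup>L ?M (\<lambda>y. V X - rho * Ql y)"
    by (intro integral_mono int_fin[OF finK] pw)
  also have "\<dots> = V X - rho * (p * Qf X)"
    using P.prob_space by (simp add: int_fin[OF finK] intQl)
  also have "\<dots> \<le> (1 - gam) * V X"
  proof -
    have "\<forall>u\<in>Vs. X (mir R u) = - X u" unfolding X_def using antisym by blast
    moreover have "\<forall>r\<in>R. X (r, False) = 0" unfolding X_def using traj_R by blast
    ultimately show ?thesis using contraction[of X] by (simp add: algebra_simps)
  qed
  finally have real: "integral\<^sup>L ?M (\<lambda>y. V (traj (z y) (Suc t))) \<le> (1 - gam) * V X" .
  have "(\<integral>\<^sup>+y. ennreal (V (traj (z y) (Suc t))) \<partial>?M) = ennreal (integral\<^sup>L ?M (\<lambda>y. V (traj (z y) (Suc t))))"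
    by (rule nn_integral_eq_integral[OF int_fin[OF finK]]) (simp add: V_nonneg)
  also have "\<dots> \<le> ennreal ((1 - gam) * V X)" using real by (rule ennreal_leI)
  finally show ?thesis unfolding z_def X_def .
qed

end

context model begin

definition W :: "nat \<Rightarrow> ennreal" where
  "W t = (\<integral>\<^sup>+\<omega>. ennreal (V (traj \<omega> t)) \<partial>edge_sampling p E)"

lemma Omega_eq: "edge_sampling p E = PiM (UNIV \<times> E) (\<lambda>_. measure_pmf (bernoulli_pmf p))"
  by (simp add: edge_sampling_def)

lemma W_transfer: "W t = (\<integral>\<^sup>+\<omega>. ennreal (V (traj \<omega> t)) \<partial>PJ p (Jt t))"
  unfolding W_def Omega_eq by (rule int_transfer[OF Jt_fin Jt_sub dep_traj])

lemma W_step: "W (Suc t) \<le> ennreal (1 - gam) * W t"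
proof -
  let ?K = "{t} \<times> E"
  have finK: "finite ?K" using finite_E by simp
  have JS: "Jt (Suc t) = Jt t \<union> ?K" by (auto simp: Jt_def)
  have disj: "Jt t \<inter> ?K = {}" by (auto simp: Jt_def)
  have "W (Suc t) = (\<integral>\<^sup>+\<omega>. ennreal (V (traj \<omega> (Suc t))) \<partial>PJ p (Jt t \<union> ?K))"
    unfolding W_transfer JS ..
  also have "\<dots> = (\<integral>\<^sup>+x. (\<integral>\<^sup>+y. ennreal (V (traj (merge (Jt t) ?K (x, y)) (Suc t))) \<partial>PJ p ?K) \<partial>PJ p (Jt t))"
    by (rule product_sigma_finite.product_nn_integral_fold[OF PSF disj Jt_fin finK meas_fin])
      (simp add: Jt_fin finK)
  also have "\<dots> \<le> (\<integral>\<^sup>+x. ennreal ((1 - gam) * V (traj x t)) \<partial>PJ p (Jt t))"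
    by (intro nn_integral_mono inner)
  also have "\<dots> = (\<integral>\<^sup>+x. ennreal (1 - gam) * ennreal (V (traj x t)) \<partial>PJ p (Jt t))"
    using gam_le V_nonneg by (intro nn_integral_cong) (simp add: ennreal_mult)
  also have "\<dots> = ennreal (1 - gam) * (\<integral>\<^sup>+x. ennreal (V (traj x t)) \<partial>PJ p (Jt t))"
    by (rule nn_integral_cmult[OF meas_fin[OF Jt_fin]])
  also have "\<dots> = ennreal (1 - gam) * W t" unfolding W_transfer ..
  finally show ?thesis .
qed

lemma W0: "W 0 = ennreal (V x0)"
proof -
  interpret P: prob_space "edge_sampling p E"
    unfolding Omega_eq by (rule prob_space_PiM) (simp add: prob_space_measure_pmf)
  show ?thesis unfolding W_def by (simp add: P.emeasure_space_1)
qed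

lemma W_bound: "W t \<le> ennreal ((1 - gam) ^ t * V x0)"
proof (induction t)
  case 0 then show ?case by (simp add: W0)
next
  case (Suc t)
  have "W (Suc t) \<le> ennreal (1 - gam) * W t" by (rule W_step)
  also have "\<dots> \<le> ennreal (1 - gam) * ennreal ((1 - gam) ^ t * V x0)"
    using Suc.IH by (intro mult_left_mono) auto
  also have "\<dots> = ennreal ((1 - gam) ^ Suc t * V x0)"
    using gam_le V_nonneg by (simp add: ennreal_mult[symmetric] mult.assoc)
  finally show ?case .
qed

lemma Vx0: "V x0 \<le> 2 * real n / rho"
proof -
  have "V x0 \<le> (\<Sum>u\<in>Vs. 1 / rho)"
    unfolding V_def
  proof (rule sum_mono)
    fix u assume u: "u \<in> Vs"
    obtain i b where ub: "u = (i, b)" by (cases u)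
    have i: "i < n" using u ub by (simp add: mem_Vs)
    have "\<bar>x0 u\<bar> = \<bar>x0 (i, False)\<bar>"
    proof (cases b)
      case True
      then have "i \<notin> R" using u ub by (simp add: mem_Vs)
      then have "mir R (i, False) = u" using True ub by (simp add: mir_def)
      moreover have "(i, False) \<in> Vs" using i by (simp add: mem_Vs)
      ultimately show ?thesis using x0mir by force
    qed (simp add: ub)
    then have "\<bar>x0 u\<bar> \<le> 1" using x0b i by auto
    then have "(x0 u)\<^sup>2 \<le> 1" by (simp add: abs_le_square_iff[symmetric] power_le_one abs_square_le_1)
    then have "(x0 u)\<^sup>2 / a u \<le> 1 / a u" using a_pos[OF u] by (intro divide_right_mono) auto
    also have "\<dots> \<le> 1 / rho" using rho_le[OF u] rho_pos by (intro divide_left_mono) auto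
    finally show "(x0 u)\<^sup>2 / a u \<le> 1 / rho" .
  qed
  also have "\<dots> = real (card Vs) / rho" by simp
  also have "\<dots> \<le> real (2 * n) / rho" using card_Vs rho_pos by (intro divide_right_mono) auto
  finally show ?thesis by simp
qed

end

lemma geom_shift:
  fixes q :: real and N :: nat
  assumes q0: "0 \<le> q" and q1: "q < 1"
  shows "summable (\<lambda>t. q ^ (t - N))" "(\<Sum>t. q ^ (t - N)) = real N + 1 / (1 - q)"
proof -
  have g: "summable (\<lambda>t. q ^ t)" using q0 q1 by (intro summable_geometric) auto
  have sh: "(\<lambda>t. q ^ (t + N - N)) = (\<lambda>t. q ^ t)" by simp
  show s: "summable (\<lambda>t. q ^ (t - N))"
    using summable_iff_shift[of "\<lambda>t. q ^ (t - N)" N] g sh by simp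
  have "(\<Sum>t. q ^ (t - N)) = (\<Sum>t. q ^ (t + N - N)) + (\<Sum>i<N. q ^ (i - N))"
    by (rule suminf_split_initial_segment[OF s])
  also have "(\<Sum>i<N. q ^ (i - N)) = (\<Sum>i<N. 1)" by (intro sum.cong) auto
  also have "(\<Sum>t. q ^ (t + N - N)) = 1 / (1 - q)"
    using suminf_geometric[of q] q0 q1 by simp
  finally show "(\<Sum>t. q ^ (t - N)) = real N + 1 / (1 - q)" by simp
qed

context model begin

lemma spread_V:
  assumes e: "0 < eps" and sp: "eps < spread Vs x"
  shows "eps\<^sup>2 / 4 < V x"
proof -
  have fin: "finite (x ` Vs)" "x ` Vs \<noteq> {}" using finite_Vs Vs_ne by auto
  obtain u1 where u1: "u1 \<in> Vs" "Max (x ` Vs) = x u1" using Max_in[OF fin] by auto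
  obtain u2 where u2: "u2 \<in> Vs" "Min (x ` Vs) = x u2" using Min_in[OF fin] by auto
  have d: "eps < x u1 - x u2" using sp u1 u2 unfolding spread_def by simp
  obtain u where u: "u \<in> Vs" "eps / 2 < \<bar>x u\<bar>"
  proof (cases "eps / 2 < \<bar>x u1\<bar>")
    case True then show ?thesis using that u1 by blast
  next
    case False
    then have "eps / 2 < \<bar>x u2\<bar>" using d by linarith
    then show ?thesis using that u2 by blast
  qed
  have "(eps / 2)\<^sup>2 < \<bar>x u\<bar>\<^sup>2" using u e by (intro power_strict_mono) auto
  then have lt: "eps\<^sup>2 / 4 < (x u)\<^sup>2" by (simp add: power_divide)
  have "(x u)\<^sup>2 \<le> (x u)\<^sup>2 / a u"
    using a_pos[OF u(1)] a_lt1[OF u(1)] by (simp add: le_divide_eq mult_left_le)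
  also have "\<dots> \<le> V x" unfolding V_def
    by (rule member_le_sum[OF u(1) _ finite_Vs]) (simp add: a_pos less_imp_le)
  finally show ?thesis using lt by simp
qed


abbreviation "fbad eps t \<omega> \<equiv> (if eps\<^sup>2 / 4 < V (traj \<omega> (Suc t)) then 1 else 0 :: ennreal)"

lemma lt_pointwise:
  assumes e: "0 < eps"
  shows "last_time n R E a x0 eps \<omega> \<le> (\<Sum>t. fbad eps t \<omega>)"
  unfolding last_time_def
proof (rule SUP_least)
  fix s assume "s \<in> {t. eps < spread Vs (traj \<omega> t)}"
  then have cs: "eps\<^sup>2 / 4 < V (traj \<omega> s)" using spread_V e by auto
  have "(of_nat s :: ennreal) = (\<Sum>t<s. fbad eps t \<omega>)"
  proof -
    have "fbad eps t \<omega> = 1" if "t < s" for t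
    proof -
      have "V (traj \<omega> s) \<le> V (traj \<omega> (Suc t))" using that by (intro V_mono) simp
      with cs show ?thesis by simp
    qed
    then have "(\<Sum>t<s. fbad eps t \<omega>) = (\<Sum>t<s. 1)" by simp
    then show ?thesis by simp
  qed
  also have "\<dots> \<le> (\<Sum>t. fbad eps t \<omega>)" by (rule sum_le_suminf) (auto simp: summableI)
  finally show "of_nat s \<le> (\<Sum>t. fbad eps t \<omega>)" .
qed

lemma fbad_meas: "fbad eps t \<in> borel_measurable (edge_sampling p E)"
  unfolding Omega_eq by (rule meas_dep[OF Jt_fin Jt_sub dep_traj])

lemma Ef_le1: "(\<integral>\<^sup>+\<omega>. fbad eps t \<omega> \<partial>edge_sampling p E) \<le> 1"
proof -
  interpret P: prob_space "edge_sampling p E"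
    unfolding Omega_eq by (rule prob_space_PiM) (simp add: prob_space_measure_pmf)
  have "(\<integral>\<^sup>+\<omega>. fbad eps t \<omega> \<partial>edge_sampling p E) \<le> (\<integral>\<^sup>+\<omega>. 1 \<partial>edge_sampling p E)"
    by (intro nn_integral_mono) simp
  also have "\<dots> = 1" by (simp add: P.emeasure_space_1)
  finally show ?thesis .
qed

lemma Ef_leW:
  assumes e: "0 < eps"
  shows "(\<integral>\<^sup>+\<omega>. fbad eps t \<omega> \<partial>edge_sampling p E) \<le> ennreal (4 / eps\<^sup>2 * ((1 - gam) ^ Suc t * V x0))"
proof -
  let ?c = "4 / eps\<^sup>2"
  have c0: "0 \<le> ?c" by simp
  have "(\<integral>\<^sup>+\<omega>. fbad eps t \<omega> \<partial>edge_sampling p E) \<le> (\<integral>\<^sup>+\<omega>. ennreal ?c * ennreal (V (traj \<omega> (Suc t))) \<partial>edge_sampling p E)"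
  proof (intro nn_integral_mono)
    fix \<omega>
    show "fbad eps t \<omega> \<le> ennreal ?c * ennreal (V (traj \<omega> (Suc t)))"
    proof (cases "eps\<^sup>2 / 4 < V (traj \<omega> (Suc t))")
      case True
      then have "1 \<le> ?c * V (traj \<omega> (Suc t))" using e by (simp add: field_simps)
      then have h: "ennreal 1 \<le> ennreal (?c * V (traj \<omega> (Suc t)))" by (rule ennreal_leI)
      have "fbad eps t \<omega> = 1" using True by (simp del: motion_traj.simps)
      then show ?thesis using h ennreal_mult[OF c0 V_nonneg, of "traj \<omega> (Suc t)"]
        by (metis ennreal_1)
    qed simp
  qed
  also have "\<dots> = ennreal ?c * W (Suc t)"
    unfolding W_def by (rule nn_integral_cmult) (unfold Omega_eq, rule meas_dep[OF Jt_fin Jt_sub dep_traj])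
  also have "\<dots> \<le> ennreal ?c * ennreal ((1 - gam) ^ Suc t * V x0)"
    by (intro mult_left_mono W_bound) simp
  also have "\<dots> = ennreal (?c * ((1 - gam) ^ Suc t * V x0))"
  proof -
    have "0 \<le> (1 - gam) ^ Suc t * V x0" using gam_le V_nonneg by simp
    then show ?thesis by (rule ennreal_mult[OF c0, symmetric])
  qed
  finally show ?thesis .
qed

lemma ET_bound:
  assumes e: "0 < eps" and N: "4 / eps\<^sup>2 * V x0 * (1 - gam) ^ N \<le> 1"
  shows "(\<integral>\<^sup>+\<omega>. last_time n R E a x0 eps \<omega> \<partial>edge_sampling p E) \<le> ennreal (real N + 1 / gam)"
proof -
  let ?q = "1 - gam"
  have q0: "0 \<le> ?q" and q1: "?q < 1" using gam_le gam_pos by auto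
  have per: "(\<integral>\<^sup>+\<omega>. fbad eps t \<omega> \<partial>edge_sampling p E) \<le> ennreal (?q ^ (t - N))" for t
  proof (cases "Suc t \<le> N")
    case True
    then have "t - N = 0" by simp
    then show ?thesis using Ef_le1[of eps t] by simp
  next
    case False
    have "4 / eps\<^sup>2 * (?q ^ Suc t * V x0) = (4 / eps\<^sup>2 * V x0 * ?q ^ N) * ?q ^ (Suc t - N)"
      using False by (simp add: power_add[symmetric])
    also have "\<dots> \<le> 1 * ?q ^ (Suc t - N)"
      using N q0 by (intro mult_right_mono) auto
    also have "\<dots> \<le> ?q ^ (t - N)"
      using q0 q1 by (simp add: power_decreasing)
    finally have "4 / eps\<^sup>2 * (?q ^ Suc t * V x0) \<le> ?q ^ (t - N)" .
    then show ?thesis using Ef_leW[OF e, of t] by (meson ennreal_leI order_trans)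
  qed
  have "(\<integral>\<^sup>+\<omega>. last_time n R E a x0 eps \<omega> \<partial>edge_sampling p E) \<le> (\<integral>\<^sup>+\<omega>. (\<Sum>t. fbad eps t \<omega>) \<partial>edge_sampling p E)"
    by (intro nn_integral_mono lt_pointwise e)
  also have "\<dots> = (\<Sum>t. (\<integral>\<^sup>+\<omega>. fbad eps t \<omega> \<partial>edge_sampling p E))"
    by (rule nn_integral_suminf) (rule fbad_meas)
  also have "\<dots> \<le> (\<Sum>t. ennreal (?q ^ (t - N)))"
    by (intro suminf_le per summableI)
  also have "\<dots> = ennreal (\<Sum>t. ?q ^ (t - N))"
    using geom_shift(1)[OF q0 q1] q0 by (intro suminf_ennreal2) auto
  also have "\<dots> = ennreal (real N + 1 / gam)"
    using geom_shift(2)[OF q0 q1] by simp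
  finally show ?thesis .
qed

end

lemma ln2_ge: "1 / 2 \<le> ln (2::real)"
proof -
  have "ln (1 / 2 :: real) \<le> 1 / 2 - 1" by (rule ln_le_minus_one) simp
  then show ?thesis by (simp add: ln_div)
qed

context model begin

lemma deg_pos:
  assumes "E \<noteq> {}"
  shows "\<exists>u\<in>Vs. 1 \<le> sym_degree n R E u"
proof -
  obtain e where e: "e \<in> E" using assms by blast
  then obtain k l where kl: "k < n" "l < n" "k \<noteq> l" "e = {k, l}"
    using simple unfolding simple_graph_on_def by blast
  let ?u = "(k, False)" and ?v = "(l, False)"
  have uv: "?u \<in> Vs" "?v \<in> Vs" using kl by (auto simp: mem_Vs)
  have "{?u, ?v} \<in> sym_edges_of R e" unfolding sym_edges_of_def kl(4) by simp
  with e have "{?u, ?v} \<in> sym_edges R E" unfolding sym_edges_def by blast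
  then have "?v \<in> {v \<in> Vs. v \<noteq> ?u \<and> {?u, v} \<in> sym_edges R E}" using uv kl by auto
  then have "0 < sym_degree n R E ?u"
    unfolding sym_degree_def using finite_Vs by (subst card_gt_0_iff) auto
  with uv show ?thesis by (intro bexI[of _ ?u]) auto
qed

lemma final_model:
  assumes Ene: "E \<noteq> {}" and e0: "0 < eps" and e1: "eps < 1"
  shows "(\<integral>\<^sup>+\<omega>. last_time n R E a x0 eps \<omega> \<partial>edge_sampling p E)
    \<le> ennreal (18 * (real (Max (sym_degree n R E ` Vs)) ^ 2 * real n ^ 4 / (p ^ 3 * (Min (a ` Vs)) ^ 2))
                 * ln (real n / (Min (a ` Vs) * eps)))"
proof -
  define d where "d = Max (sym_degree n R E ` Vs)"
  have rho_eq: "Min (a ` Vs) = rho" by (simp add: rho_def)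
  obtain u0 where u0: "u0 \<in> Vs" "1 \<le> sym_degree n R E u0" using deg_pos[OF Ene] by blast
  have d1: "1 \<le> real d"
  proof -
    have "sym_degree n R E u0 \<le> d" unfolding d_def using finite_Vs u0 by (intro Max_ge) auto
    with u0 show ?thesis by simp
  qed
  have rho_half: "rho < 1 / 2"
  proof -
    have "a u0 * 2 \<le> a u0 * (real (sym_degree n R E u0) + 1)"
      using u0 a_pos[OF u0(1)] by (intro mult_left_mono) auto
    with a_deg[OF u0(1)] have "a u0 < 1 / 2" by simp
    with rho_le[OF u0(1)] show ?thesis by simp
  qed
  have rp: "0 < rho" by (rule rho_pos)
  have nr: "1 \<le> real n" using n1 by simp
  define Y where "Y = real n / (rho * eps)"
  define L where "L = ln Y"
  have re: "rho * eps < 1 / 2"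
  proof -
    have "rho * eps \<le> rho * 1" using rp e1 by (intro mult_left_mono) auto
    with rho_half show ?thesis by simp
  qed
  have Y2: "2 \<le> Y"
  proof -
    have "2 * (rho * eps) \<le> 1" using re by simp
    also have "\<dots> \<le> real n" by (rule nr)
    finally show ?thesis unfolding Y_def using rp e0 by (simp add: field_simps)
  qed
  have Lh: "1 / 2 \<le> L"
    unfolding L_def using ln2_ge Y2 by (smt (verit) ln_le_cancel_iff)
  define K' where "K' = 8 * real n / (rho * eps\<^sup>2)"
  have K'pos: "0 < K'" unfolding K'_def using rp e0 n1 by simp
  have K'Y: "K' \<le> Y ^ 5"
  proof -
    have Y3: "8 \<le> Y ^ 3" using power_mono[OF Y2, of 3] by simp
    have nrho: "1 \<le> real n / rho" using rp nr rho_lt1 by (simp add: field_simps)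
    have "K' = 8 * (real n / rho / eps\<^sup>2)" unfolding K'_def by (simp add: field_simps)
    also have "real n / rho / eps\<^sup>2 \<le> (real n / rho) ^ 2 / eps\<^sup>2"
    proof -
      have "real n / rho * 1 \<le> real n / rho * (real n / rho)" using nrho by (intro mult_left_mono) auto
      then have "real n / rho \<le> (real n / rho) ^ 2" by (simp add: power2_eq_square)
      then show ?thesis by (rule divide_right_mono) simp
    qed
    also have "\<dots> = Y\<^sup>2" unfolding Y_def by (simp add: power_divide power_mult_distrib)
    finally have "K' \<le> 8 * Y\<^sup>2" by simp
    also have "\<dots> \<le> Y ^ 3 * Y\<^sup>2" using Y3 by (intro mult_right_mono) auto
    also have "\<dots> = Y ^ 5" by (simp add: power_add[symmetric])
    finally show ?thesis .
  qed
  define L0 where "L0 = max 0 (ln K')"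
  have L0: "L0 \<le> 5 * L"
  proof -
    have "ln K' \<le> ln (Y ^ 5)" using K'Y K'pos by (rule ln_mono)
    also have "\<dots> = 5 * L" unfolding L_def using Y2 by (simp add: ln_realpow)
    finally show ?thesis unfolding L0_def using Lh by simp
  qed
  have L00: "0 \<le> L0" unfolding L0_def by simp
  define N where "N = nat \<lceil>L0 / gam\<rceil>"
  have gp: "0 < gam" by (rule gam_pos)
  have N1: "L0 / gam \<le> real N" unfolding N_def by linarith
  have N2: "real N \<le> L0 / gam + 1"
  proof -
    have y0: "0 \<le> L0 / gam" using L00 gp by simp
    then have "0 \<le> \<lceil>L0 / gam\<rceil>" by simp
    then have "real N = of_int \<lceil>L0 / gam\<rceil>" unfolding N_def by simp
    also have "\<dots> \<le> L0 / gam + 1" using ceiling_correct[of "L0 / gam"] by linarith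
    finally show ?thesis .
  qed
  have Ncond: "4 / eps\<^sup>2 * V x0 * (1 - gam) ^ N \<le> 1"
  proof -
    have q: "(1 - gam) ^ N \<le> exp (- gam) ^ N"
      using gam_le by (intro power_mono) (auto simp: exp_ge_add_one_self[of "- gam", simplified])
    have "exp (- gam) ^ N = exp (- (gam * real N))" by (simp add: exp_of_nat_mult[symmetric] mult.commute)
    also have "\<dots> \<le> exp (- L0)" using N1 gp by (simp add: field_simps)
    also have "\<dots> \<le> exp (- ln K')" unfolding L0_def by simp
    also have "\<dots> = 1 / K'" using K'pos by (simp add: exp_minus inverse_eq_divide)
    finally have qN: "(1 - gam) ^ N \<le> 1 / K'" using q by simp
    have "4 / eps\<^sup>2 * V x0 \<le> 4 / eps\<^sup>2 * (2 * real n / rho)"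
      using Vx0 by (intro mult_left_mono) auto
    also have "\<dots> = K'" unfolding K'_def by (simp add: field_simps)
    finally have c: "4 / eps\<^sup>2 * V x0 \<le> K'" .
    have "4 / eps\<^sup>2 * V x0 * (1 - gam) ^ N \<le> K' * (1 / K')"
      using c qN gam_le V_nonneg K'pos by (intro mult_mono) auto
    with K'pos show ?thesis by simp
  qed
  have "(\<integral>\<^sup>+\<omega>. last_time n R E a x0 eps \<omega> \<partial>edge_sampling p E) \<le> ennreal (real N + 1 / gam)"
    by (rule ET_bound[OF e0 Ncond])
  also have "real N + 1 / gam \<le> 18 * (real d ^ 2 * real n ^ 4 / (p ^ 3 * rho ^ 2)) * L"
  proof -
    have g1: "1 \<le> 1 / gam" using gam_le gp by simp
    have "real N + 1 / gam \<le> L0 / gam + 2 / gam" using N2 g1 by simp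
    also have "\<dots> \<le> 5 * L / gam + 4 * L / gam"
      using L0 Lh gp by (intro add_mono divide_right_mono) auto
    also have "\<dots> = 18 * real n ^ 3 * L / (p * rho\<^sup>2)"
      unfolding gam_def using p0 rp n1 by (simp add: field_simps)
    also have "\<dots> \<le> 18 * (real d ^ 2 * real n ^ 4 / (p ^ 3 * rho ^ 2)) * L"
    proof -
      have a1: "real n ^ 3 \<le> real d ^ 2 * real n ^ 4"
      proof -
        have "real n ^ 3 * 1 \<le> real n ^ 3 * (real d ^ 2 * real n)"
          using d1 nr by (intro mult_left_mono) (auto simp: one_le_power intro: order_trans[OF _ mult_mono[of 1 _ 1]])
        moreover have "real n ^ 3 * (real d ^ 2 * real n) = real d ^ 2 * real n ^ 4"
          by (simp add: power_Suc power2_eq_square power3_eq_cube algebra_simps numeral_eq_Suc)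
        ultimately show ?thesis by simp
      qed
      have a2: "p ^ 3 \<le> p" using p0 p1 by (simp add: power_le_one power3_eq_cube mult_le_one)
      have "real n ^ 3 / (p * rho\<^sup>2) \<le> real d ^ 2 * real n ^ 4 / (p * rho\<^sup>2)"
        using a1 p0 rp by (intro divide_right_mono) auto
      also have "\<dots> \<le> real d ^ 2 * real n ^ 4 / (p ^ 3 * rho\<^sup>2)"
        using a2 p0 rp by (intro divide_left_mono mult_right_mono mult_pos_pos) auto
      finally have "real n ^ 3 / (p * rho\<^sup>2) \<le> real d ^ 2 * real n ^ 4 / (p ^ 3 * rho\<^sup>2)" .
      then have "18 * (real n ^ 3 / (p * rho\<^sup>2)) * L \<le> 18 * (real d ^ 2 * real n ^ 4 / (p ^ 3 * rho\<^sup>2)) * L"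
        using Lh by (intro mult_right_mono) auto
      then show ?thesis by simp
    qed
    finally show ?thesis .
  qed
  then have "ennreal (real N + 1 / gam) \<le> ennreal (18 * (real d ^ 2 * real n ^ 4 / (p ^ 3 * rho ^ 2)) * L)"
    by (rule ennreal_leI)
  finally show ?thesis unfolding d_def rho_eq L_def Y_def .
qed

end

theorem theorem4:
  shows "\<exists>C>0. \<forall>(n::nat) (R::nat set) (E::nat set set) (a::vtx \<Rightarrow> real) (p::real) (eps::real) (x0::vtx \<Rightarrow> real).
    n \<ge> 1 \<and> R \<subseteq> {..<n} \<and> R \<noteq> {} \<and> simple_graph_on n E \<and> graph_connected n E \<and>
    (\<forall>u\<in>sym_vertices n R. 0 < a u \<and> a u < 1 / (real (sym_degree n R E u) + 1)) \<and>
    (\<forall>u\<in>sym_vertices n R. a (mir R u) = a u) \<and>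
    0 < p \<and> p \<le> 1 \<and> 0 < eps \<and> eps < 1 \<and>
    (\<forall>i<n. 0 \<le> x0 (i, False) \<and> x0 (i, False) \<le> 1) \<and>
    (\<forall>i\<in>R. x0 (i, False) = 0) \<and>
    (\<forall>u\<in>sym_vertices n R. x0 (mir R u) = - x0 u)
    \<longrightarrow>
    (\<integral>\<^sup>+\<omega>. last_time n R E a x0 eps \<omega> \<partial>edge_sampling p E)
      \<le> ennreal (C * (real (Max (sym_degree n R E ` sym_vertices n R)) ^ 2 * real n ^ 4
                     / (p ^ 3 * (Min (a ` sym_vertices n R)) ^ 2))
                 * ln (real n / (Min (a ` sym_vertices n R) * eps)))"
proof (intro exI[of _ "18::real"] conjI allI impI)
  show "(0::real) < 18" by simp
  fix n :: nat and R :: "nat set" and E :: "nat set set" and a :: "vtx \<Rightarrow> real" and p :: real and eps :: real and x0 :: "vtx \<Rightarrow> real"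
  assume H: "n \<ge> 1 \<and> R \<subseteq> {..<n} \<and> R \<noteq> {} \<and> simple_graph_on n E \<and> graph_connected n E \<and>
    (\<forall>u\<in>sym_vertices n R. 0 < a u \<and> a u < 1 / (real (sym_degree n R E u) + 1)) \<and>
    (\<forall>u\<in>sym_vertices n R. a (mir R u) = a u) \<and>
    0 < p \<and> p \<le> 1 \<and> 0 < eps \<and> eps < 1 \<and>
    (\<forall>i<n. 0 \<le> x0 (i, False) \<and> x0 (i, False) \<le> 1) \<and>
    (\<forall>i\<in>R. x0 (i, False) = 0) \<and>
    (\<forall>u\<in>sym_vertices n R. x0 (mir R u) = - x0 u)"
  interpret model n R E a p x0
    using H by unfold_locales auto
  have e0: "0 < eps" and e1: "eps < 1" using H by auto
  show "(\<integral>\<^sup>+\<omega>. last_time n R E a x0 eps \<omega> \<partial>edge_sampling p E)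
      \<le> ennreal (18 * (real (Max (sym_degree n R E ` sym_vertices n R)) ^ 2 * real n ^ 4
                     / (p ^ 3 * (Min (a ` sym_vertices n R)) ^ 2))
                 * ln (real n / (Min (a ` sym_vertices n R) * eps)))"
  proof (cases "E = {}")
    case False
    show ?thesis by (rule final_model[OF False e0 e1])
  next
    case True
    have n_eq: "n = 1"
    proof (rule ccontr)
      assume "n \<noteq> 1"
      with n1 have "0 < n" "1 < n" by auto
      then have "(0, 1) \<in> {(k, l). {k, l} \<in> E}\<^sup>*" using conn unfolding graph_connected_def by blast
      then show False using True by (simp add: rtrancl_empty)
    qed
    have Vs1: "Vs = {(0, False)}"
    proof -
      have "R = {0}" using Rn Rne n_eq by auto
      then show ?thesis using n_eq by (auto simp: sym_vertices_def)
    qed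
    have "last_time n R E a x0 eps \<omega> = 0" for \<omega>
    proof -
      have "{t. eps < spread Vs (traj \<omega> t)} = {}" using Vs1 e0 by (simp add: spread_def)
      then show ?thesis unfolding last_time_def by (simp add: bot_ennreal)
    qed
    then show ?thesis by simp
  qed
qed

end
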